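(* Let $r\geq1$ be odd, $m\geq 3$, $n=(r+1)m$, let $u$ be an integer with $\gcd(u,2^m-1)=1$, let $\alpha$ be a primitive element of $\mathbb{F}_{2^{rm}}$, and let $0\leq s,l\leq 2^{rm}-2$ be integers. For $0\le k\le 2^{rm}-2$ let $\Delta_k=\{\alpha^i\mid k\leq i\leq k+2^{rm-1}-1\}$. Let $F\colon\mathbb{F}_{2^{rm}}\times\mathbb{F}_{2^m}\to\mathbb{F}_2$ be the Boolean function with $$\mathrm{supp}(F)=\{(\gamma y^u,y)\mid y\in\mathbb{F}_{2^m}^*,\ \gamma\in\Delta_s\}\cup\{(\gamma,0)\mid\gamma\in\Delta_l\}.$$ Then $F$ is balanced.
   Context: $\mathbb{F}_{2^{rm}}\times\mathbb{F}_{2^m}$ is viewed as an $n$-dimensional $\mathbb{F}_2$-vector space ($\mathbb{F}_{2^m}\subseteq\mathbb{F}_{2^{rm}}$). An $n$-variable Boolean function is balanced if its support has exactly $2^{n-1}$ elements. *)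

theory Defs
  imports Complex_Main
begin

text \<open>The subfield F_(2^m) of a finite field of order 2^(r m), as the set of
  fixed points of the 2^m-th power (Frobenius) map.\<close>
definition subfield2 :: "nat \<Rightarrow> 'a::field set" where
  "subfield2 m = {x. x ^ (2 ^ m) = x}"

definition primitive_element :: "'a::field \<Rightarrow> bool" where
  "primitive_element \<alpha> \<longleftrightarrow> \<alpha> \<noteq> 0 \<and> (\<forall>x. x \<noteq> 0 \<longrightarrow> (\<exists>i::nat. x = \<alpha> ^ i))"

definition Delta :: "'a::field \<Rightarrow> nat \<Rightarrow> nat \<Rightarrow> 'a set" where
  "Delta \<alpha> N k = {\<alpha> ^ i | i. k \<le> i \<and> i \<le> k + 2 ^ (N - 1) - 1}"

text \<open>An n-variable Boolean function f on domain D (with |D| = 2^n) is balanced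
  iff its support has exactly 2^(n-1) elements.\<close>
definition balanced :: "('b \<Rightarrow> bool) \<Rightarrow> 'b set \<Rightarrow> nat \<Rightarrow> bool" where
  "balanced f D n \<longleftrightarrow> card {x \<in> D. f x} = 2 ^ (n - 1)"

end

theory Submission
  imports Defs
begin

lemma alpha_facts:
  fixes \<alpha> :: "'a::{field,finite}"
  assumes "primitive_element \<alpha>"
  shows "\<alpha> ^ (card (UNIV::'a set) - 1) = 1"
    and "\<alpha>^i = \<alpha>^j \<longleftrightarrow> i mod (card (UNIV::'a set)-1) = j mod (card (UNIV::'a set)-1)"
    and "card (UNIV::'a set) - 1 > 0" and "\<alpha> \<noteq> 0"
    and "x \<noteq> 0 \<Longrightarrow> \<exists>i < card (UNIV::'a set) - 1. x = \<alpha> ^ i"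
proof -
  define n0 where "n0 = card (UNIV::'a set) - 1"
  define Z where "Z = (UNIV::'a set) - {0}"
  have cardZ: "card Z = n0" unfolding Z_def n0_def by (simp add: card_Diff_singleton)
  have a0: "\<alpha> \<noteq> 0" using assms primitive_element_def by auto
  have "(1::'a) \<in> Z" by (simp add: Z_def)
  then have n0pos: "n0 > 0" using cardZ by (metis card_gt_0_iff empty_iff finite)
  have bij: "bij_betw (\<lambda>x. \<alpha>*x) Z Z"
    by (rule bij_betw_byWitness[where f'="\<lambda>x. x/\<alpha>"]) (auto simp: Z_def a0)
  have "prod (\<lambda>x. \<alpha>*x) Z = prod (\<lambda>x. x) Z"
    using prod.reindex_bij_betw[OF bij, of "\<lambda>x. x"] by simp
  moreover have "prod (\<lambda>x. \<alpha>*x) Z = \<alpha>^card Z * prod (\<lambda>x. x) Z"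
    by (simp add: prod.distrib)
  moreover have "prod (\<lambda>x. x) Z \<noteq> 0" by (simp add: Z_def)
  ultimately have an: "\<alpha>^n0 = 1" using cardZ by simp
  then show "\<alpha> ^ (card (UNIV::'a set) - 1) = 1" by (simp add: n0_def)
  have modeq: "\<alpha>^i = \<alpha>^(i mod n0)" for i
  proof -
    have "\<alpha>^i = \<alpha>^(n0*(i div n0) + i mod n0)" by (metis mult.commute div_mult_mod_eq)
    also have "\<dots> = (\<alpha>^n0)^(i div n0) * \<alpha>^(i mod n0)" by (simp only: power_add power_mult)
    also have "\<dots> = \<alpha>^(i mod n0)" by (simp add: an)
    finally show ?thesis .
  qed
  have img: "(\<lambda>i. \<alpha>^i) ` {..<n0} = Z"
  proof
    show "(\<lambda>i. \<alpha>^i) ` {..<n0} \<subseteq> Z" using a0 by (auto simp: Z_def)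
    show "Z \<subseteq> (\<lambda>i. \<alpha>^i) ` {..<n0}"
    proof
      fix x assume "x \<in> Z"
      then obtain i where "x = \<alpha>^i" using assms by (auto simp: Z_def primitive_element_def)
      then have "x = \<alpha>^(i mod n0)" using modeq by simp
      then show "x \<in> (\<lambda>i. \<alpha>^i) ` {..<n0}" using n0pos by auto
    qed
  qed
  have inj: "inj_on (\<lambda>i. \<alpha>^i) {..<n0}"
    by (rule eq_card_imp_inj_on) (simp_all add: img cardZ)
  show "\<alpha>^i = \<alpha>^j \<longleftrightarrow> i mod (card (UNIV::'a set)-1) = j mod (card (UNIV::'a set)-1)"
  proof
    assume "\<alpha>^i = \<alpha>^j"
    then have "\<alpha>^(i mod n0) = \<alpha>^(j mod n0)" using modeq by metis
    then show "i mod (card (UNIV::'a set)-1) = j mod (card (UNIV::'a set)-1)"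
      using inj n0pos unfolding n0_def[symmetric] inj_on_def by simp
  next
    assume "i mod (card (UNIV::'a set)-1) = j mod (card (UNIV::'a set)-1)"
    then show "\<alpha>^i = \<alpha>^j" using modeq n0_def by metis
  qed
  show "card (UNIV::'a set) - 1 > 0" using n0pos n0_def by simp
  show "\<alpha> \<noteq> 0" by (rule a0)
  show "x \<noteq> 0 \<Longrightarrow> \<exists>i < card (UNIV::'a set) - 1. x = \<alpha> ^ i"
    using img by (auto simp: Z_def n0_def)
qed

lemma interval_mod_inj:
  fixes i j k n :: nat
  assumes "i mod n = j mod n" "k \<le> i" "k \<le> j" "i < k + n" "j < k + n"
  shows "i = j"
proof (cases "i \<le> j")
  case True
  then have "n dvd j - i" using assms(1) mod_eq_dvd_iff_nat by metis
  moreover have "j - i < n" using assms by linarith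
  ultimately show ?thesis using True by (metis dvd_imp_le le_antisym neq0_conv not_le diff_is_0_eq)
next
  case False
  then have "n dvd i - j" using assms(1) mod_eq_dvd_iff_nat by (metis nat_le_linear)
  moreover have "i - j < n" using assms by linarith
  ultimately show ?thesis using False by (metis dvd_imp_le neq0_conv not_le diff_is_0_eq)
qed

lemma pow_dvd: "((2::nat)^m - 1) dvd (2^(m*r) - 1)"
proof (induction r)
  case 0 then show ?case by simp
next
  case (Suc r)
  have ge: "(1::nat) \<le> 2^(m*r)" by simp
  have "(2::nat)^(m*Suc r) - 1 = 2^m * (2^(m*r) - 1) + (2^m - 1)"
    using ge by (simp add: power_add algebra_simps diff_mult_distrib2)
  then show ?case by (metis Suc.IH dvd_add dvd_mult dvd_refl)
qed

theorem theorem3: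
  fixes r m s l :: nat and u :: int and \<alpha> :: "'a::{field,finite}"
    and F :: "'a \<times> 'a \<Rightarrow> bool"
  assumes "odd r" and "r \<ge> 1" and "m \<ge> 3"
    and "card (UNIV :: 'a set) = 2 ^ (r * m)"
    and "gcd u (2 ^ m - 1) = 1"
    and "primitive_element \<alpha>"
    and "s \<le> 2 ^ (r * m) - 2" and "l \<le> 2 ^ (r * m) - 2"
    and "\<And>p. p \<in> UNIV \<times> subfield2 m \<Longrightarrow> F p \<longleftrightarrow>
           p \<in> {(\<gamma> * y powi u, y) | \<gamma> y. y \<in> subfield2 m - {0} \<and> \<gamma> \<in> Delta \<alpha> (r * m) s}
             \<union> {(\<gamma>, 0) | \<gamma>. \<gamma> \<in> Delta \<alpha> (r * m) l}"
  shows "balanced F (UNIV \<times> subfield2 m) ((r + 1) * m)"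
proof -
  define N where "N = r * m"
  define n0 where "n0 = card (UNIV::'a set) - 1"
  have n0N: "n0 = 2^N - 1" using assms(4) by (simp add: n0_def N_def)
  have N3: "N \<ge> 3" using assms(2,3) unfolding N_def by (metis le_trans mult_le_mono1 mult_1)
  note AF = alpha_facts[OF assms(6), folded n0_def]
  have ieq: "\<alpha>^i = \<alpha>^j \<longleftrightarrow> i mod n0 = j mod n0" for i j using AF(2) .
  have p1: "(1::nat) \<le> 2^(N-1)" by simp
  have pN: "(2::nat)^N = 2 * 2^(N-1)" using N3 by (metis Suc_diff_1 not_numeral_le_zero not_gr0 power_Suc)
  have le: "2^(N-1) \<le> n0" using pN p1 n0N by linarith
  have cardD: "card (Delta \<alpha> N k) = 2^(N-1)" for k
  proof -
    have D: "Delta \<alpha> N k = (\<lambda>i. \<alpha>^i) ` {k..k+2^(N-1)-1}" unfolding Delta_def by auto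
    have "inj_on (\<lambda>i. \<alpha>^i) {k..k+2^(N-1)-1}"
    proof (rule inj_onI)
      fix i j assume i: "i \<in> {k..k+2^(N-1)-1}" and j: "j \<in> {k..k+2^(N-1)-1}"
        and "\<alpha>^i = \<alpha>^j"
      then have "i mod n0 = j mod n0" using ieq by simp
      moreover have "k \<le> i" "i \<le> k+2^(N-1)-1" "k \<le> j" "j \<le> k+2^(N-1)-1"
        using i j by (simp_all only: atLeastAtMost_iff)
      moreover have "i < k + n0" "j < k + n0" using calculation(3,5) le p1 by linarith+
      ultimately show "i = j" using interval_mod_inj by blast
    qed
    then show ?thesis unfolding D using p1 by (simp add: card_image)
  qed
  define c where "c = (2::nat)^m - 1"
  have cpos: "c > 0" unfolding c_def using assms(3)
    by (metis diff_is_0_eq gr0I less_one nat_power_less_imp_less not_less numeral_le_one_iff semiring_norm(69) one_less_power less_le_trans zero_less_numeral) 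
  have c1: "(2::nat)^m = c + 1" unfolding c_def by simp
  have cdvd: "c dvd n0" unfolding c_def n0N N_def using pow_dvd[of m r] by (simp add: mult.commute)
  define d where "d = n0 div c"
  have n0dc: "n0 = d * c" using cdvd unfolding d_def by simp
  have dpos: "d > 0" using AF(3) n0dc by (metis mult_0 neq0_conv)
  have E0: "subfield2 m - {0::'a} = (\<lambda>j. \<alpha>^(d*j)) ` {..<c}"
  proof
    show "subfield2 m - {0} \<subseteq> (\<lambda>j. \<alpha>^(d*j)) ` {..<c}"
    proof
      fix x :: 'a assume x: "x \<in> subfield2 m - {0}"
      then obtain i where i: "i < n0" "x = \<alpha>^i" using AF(5) by auto
      have "\<alpha>^(i*2^m) = \<alpha>^i" using x i by (simp add: subfield2_def power_mult)
      then have "(i*c + i) mod n0 = i mod n0" using ieq c1 by (simp add: algebra_simps)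
      then have "n0 dvd i*c" using mod_eq_dvd_iff_nat[of i "i*c+i" n0] by simp
      then have "d dvd i" using n0dc cpos by simp
      then obtain j where j: "i = d*j" by auto
      have "j < c" using i(1) n0dc j dpos by simp
      then show "x \<in> (\<lambda>j. \<alpha>^(d*j)) ` {..<c}" using i j by auto
    qed
    show "(\<lambda>j. \<alpha>^(d*j)) ` {..<c} \<subseteq> subfield2 m - {0}"
    proof
      fix x :: 'a assume "x \<in> (\<lambda>j. \<alpha>^(d*j)) ` {..<c}"
      then obtain j where x: "x = \<alpha>^(d*j)" by auto
      have e: "d*j*2^m = d*j + j*n0" unfolding c1 n0dc by (simp add: algebra_simps)
      have "(d*j*2^m) mod n0 = (d*j) mod n0" unfolding e by (rule mod_mult_self1)
      then have "\<alpha>^(d*j*2^m) = \<alpha>^(d*j)" using ieq by simp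
      then show "x \<in> subfield2 m - {0}" using x AF(4) by (simp add: subfield2_def power_mult)
    qed
  qed
  have injE: "inj_on (\<lambda>j. \<alpha>^(d*j)) {..<c}"
  proof (rule inj_onI)
    fix i j assume i: "i \<in> {..<c}" and j: "j \<in> {..<c}" and "\<alpha>^(d*i) = \<alpha>^(d*j)"
    then have "(d*i) mod n0 = (d*j) mod n0" using ieq by simp
    moreover have "d*i < n0" "d*j < n0" using i j n0dc dpos by auto
    ultimately have "d*i = d*j" by simp
    then show "i = j" using dpos by simp
  qed
  have cardE0: "card (subfield2 m - {0::'a}) = c" using E0 injE by (simp add: card_image)
  have z: "(0::'a) \<in> subfield2 m" by (simp add: subfield2_def)
  have cardE: "card (subfield2 m :: 'a set) = c + 1"
    using cardE0 z by (metis card_Diff_singleton finite Suc_eq_plus1 card_gt_0_iff empty_iff Suc_diff_1)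
  define A where "A = {(\<gamma> * y powi u, y) | \<gamma> y. y \<in> subfield2 m - {0} \<and> \<gamma> \<in> Delta \<alpha> (r * m) s}"
  define B where "B = {(\<gamma>, 0::'a) | \<gamma>. \<gamma> \<in> Delta \<alpha> (r * m) (l::nat)}"
  have AB: "A \<union> B \<subseteq> UNIV \<times> subfield2 m" using z unfolding A_def B_def by auto
  have S: "{x \<in> UNIV \<times> subfield2 m. F x} = A \<union> B"
    using assms(9) AB unfolding A_def[symmetric] B_def[symmetric] by auto
  have A2: "A = (\<lambda>(\<gamma>,y). (\<gamma> * y powi u, y)) ` (Delta \<alpha> N s \<times> (subfield2 m - {0}))"
    unfolding A_def N_def by auto
  have injA: "inj_on (\<lambda>(\<gamma>,y). (\<gamma> * y powi u, y)) (Delta \<alpha> N s \<times> (subfield2 m - {0}))"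
    by (rule inj_onI) (auto simp: power_int_not_zero)
  have cardA: "card A = 2^(N-1) * c" unfolding A2 using injA cardD cardE0
    by (simp add: card_image card_cartesian_product)
  have B2: "B = (\<lambda>\<gamma>. (\<gamma>, 0)) ` Delta \<alpha> N l" unfolding B_def N_def by auto
  have cardB: "card B = 2^(N-1)" unfolding B2 using cardD by (simp add: card_image inj_on_def)
  have disj: "A \<inter> B = {}" unfolding A_def B_def by auto
  have "card (A \<union> B) = 2^(N-1) * c + 2^(N-1)"
    using cardA cardB disj by (simp add: card_Un_disjoint)
  also have "\<dots> = 2^(N-1) * 2^m" using c1 by simp
  also have "\<dots> = 2^((r+1)*m - 1)" using N3 unfolding N_def
    by (simp add: power_add[symmetric] algebra_simps)
  finally show ?thesis unfolding balanced_def S .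
qed

end
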